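(* Let $n \ge 1$ and $1 \le k \le n$ be integers, and let $D_n^{2\times k}$ be the graph obtained from two disjoint copies $K_{n,1}$ and $K_{n,2}$ of the complete graph $K_n$ by adding $k$ distinct edges $e_1,\dots,e_k$, each of the form $e_i=(v_{i,1},v_{i,2})$ with $v_{i,1}$ a vertex of $K_{n,1}$ and $v_{i,2}$ a vertex of $K_{n,2}$. Then $D_n^{2\times k}$ has $2n$ vertices and $$\frac{2}{3(2n-1)} \le \lambda_2(D_n^{2\times k}) \le \frac{2k}{n}.$$
   Context: All graphs are finite, simple and unweighted. For a graph $G$ with adjacency matrix $A$ and diagonal degree matrix $D$, the graph Laplacian is $L_G = D - A$, with eigenvalues ordered $0=\lambda_1 \le \lambda_2 \le \dots$; $\lambda_2(G)$ denotes the second smallest eigenvalue of $L_G$. *)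

theory Defs
  imports "Jordan_Normal_Form.Char_Poly" "HOL-Library.Multiset"
begin

text \<open>Simple graphs on the vertex set {0..<N}, given by a symmetric irreflexive
  adjacency relation. The Laplacian L = D - A as an N x N real matrix.\<close>

definition laplacian :: "nat \<Rightarrow> (nat \<Rightarrow> nat \<Rightarrow> bool) \<Rightarrow> real mat" where
  "laplacian N E = mat N N (\<lambda>(i,j).
     if i = j then real (card {v \<in> {0..<N}. E i v})
     else (if E i j then -1 else 0))"

text \<open>Eigenvalues of a real matrix counted with algebraic multiplicity (real roots of the
  characteristic polynomial), sorted increasingly; for a symmetric matrix all roots are real.\<close>
definition sorted_eigenvalues :: "real mat \<Rightarrow> real list" where
  "sorted_eigenvalues M = sorted_list_of_multiset (proots (char_poly M))"

definition lambda2 :: "nat \<Rightarrow> (nat \<Rightarrow> nat \<Rightarrow> bool) \<Rightarrow> real" where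
  "lambda2 N E = sorted_eigenvalues (laplacian N E) ! 1"

text \<open>D_n^{2 x k}: vertices {0..<2n}; first copy of K_n on {0..<n}, second on {n..<2n};
  plus the set F of added edges (a,b) with a in the first copy and b in the second.\<close>
definition D_vertices :: "nat \<Rightarrow> nat set" where
  "D_vertices n = {0..<2*n}"

definition D_adj :: "nat \<Rightarrow> (nat \<times> nat) set \<Rightarrow> nat \<Rightarrow> nat \<Rightarrow> bool" where
  "D_adj n F u v \<longleftrightarrow>
     (u < n \<and> v < n \<and> u \<noteq> v)
   \<or> (n \<le> u \<and> u < 2*n \<and> n \<le> v \<and> v < 2*n \<and> u \<noteq> v)
   \<or> (u, v) \<in> F \<or> (v, u) \<in> F"

end

theory Submission
  imports Defs "Jordan_Normal_Form.Schur_Decomposition"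
begin

lemma sym_eig_real:
  fixes A :: "real mat" and a :: complex
  assumes A: "A \<in> carrier_mat n n" and sym: "\<And>i j. i < n \<Longrightarrow> j < n \<Longrightarrow> A $$ (i,j) = A $$ (j,i)"
  and ev: "eigenvalue (of_real_hom.mat_hom A) a"
  shows "Im a = 0"
proof -
  let ?C = "of_real_hom.mat_hom A"
  obtain v where v: "v \<in> carrier_vec n" "v \<noteq> 0\<^sub>v n" "?C *\<^sub>v v = a \<cdot>\<^sub>v v"
    using ev A unfolding eigenvalue_def eigenvector_def by auto
  define s where "s = (\<Sum>i<n. \<Sum>j<n. cnj (v$i) * complex_of_real (A $$ (i,j)) * v$j)"
  define r where "r = (\<Sum>i<n. (cmod (v$i))^2)"
  have eq: "(\<Sum>j<n. complex_of_real (A $$ (i,j)) * v$j) = a * v$i" if i: "i < n" for i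
  proof -
    have "(?C *\<^sub>v v) $ i = (a \<cdot>\<^sub>v v) $ i" using v(3) by simp
    thus ?thesis using i A v(1) by (auto simp: scalar_prod_def row_def lessThan_atLeast0)
  qed
  have s1: "s = a * complex_of_real r"
  proof -
    have "s = (\<Sum>i<n. cnj (v$i) * (\<Sum>j<n. complex_of_real (A $$ (i,j)) * v$j))"
      unfolding s_def by (simp add: sum_distrib_left mult.assoc)
    also have "\<dots> = (\<Sum>i<n. a * complex_of_real ((cmod (v$i))^2))"
    proof (rule sum.cong)
      fix i assume i: "i \<in> {..<n}"
      have "cnj (v$i) * (\<Sum>j<n. complex_of_real (A $$ (i,j)) * v$j) = a * (v$i * cnj (v$i))"
        using i by (simp add: eq)
      also have "\<dots> = a * complex_of_real ((cmod (v$i))^2)" by (metis complex_norm_square of_real_power)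
      finally show "cnj (v$i) * (\<Sum>j<n. complex_of_real (A $$ (i,j)) * v$j) = a * complex_of_real ((cmod (v$i))^2)" .
    qed simp
    finally show ?thesis unfolding r_def by (simp add: sum_distrib_left)
  qed
  have s2: "cnj s = s"
  proof -
    have "cnj s = (\<Sum>i<n. \<Sum>j<n. v$i * complex_of_real (A $$ (i,j)) * cnj (v$j))"
      unfolding s_def by (simp add: cnj_sum)
    also have "\<dots> = (\<Sum>j<n. \<Sum>i<n. v$i * complex_of_real (A $$ (i,j)) * cnj (v$j))"
      by (rule sum.swap)
    also have "\<dots> = s" unfolding s_def
      by (rule sum.cong, simp, rule sum.cong, simp, simp add: sym mult.commute mult.left_commute)
    finally show ?thesis .
  qed
  have rpos: "r > 0"
  proof -
    obtain i where i: "i < n" "v $ i \<noteq> 0" using v(1,2) by (metis carrier_vecD eq_vecI index_zero_vec(1) index_zero_vec(2))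
    have "(cmod (v$i))^2 > 0" using i by simp
    moreover have "(cmod (v$i))^2 \<le> r" unfolding r_def
      by (rule member_le_sum, insert i, auto)
    ultimately show ?thesis by linarith
  qed
  have "Im s = 0" using s2 by (metis Im_complex_of_real Reals_cnj_iff complex_is_Real_iff)
  hence "Im (a * complex_of_real r) = 0" using s1 by simp
  thus ?thesis using rpos by simp
qed

interpretation of_real_poly_hom: map_poly_inj_idom_hom "of_real :: real \<Rightarrow> complex" ..

lemma map_poly_of_real_inj:
  fixes p q :: "real poly"
  assumes "map_poly complex_of_real p = map_poly complex_of_real q"
  shows "p = q"
proof (rule poly_eqI)
  fix i
  have "coeff (map_poly complex_of_real p) i = coeff (map_poly complex_of_real q) i" using assms by simp
  thus "coeff p i = coeff q i" by (simp add: coeff_map_poly)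
qed

lemma sym_char_poly_split:
  fixes A :: "real mat"
  assumes A: "A \<in> carrier_mat n n" and sym: "\<And>i j. i < n \<Longrightarrow> j < n \<Longrightarrow> A $$ (i,j) = A $$ (j,i)"
  shows "\<exists>es. char_poly A = (\<Prod>a\<leftarrow>es. [:-a, 1:]) \<and> length es = n"
proof -
  let ?C = "of_real_hom.mat_hom A :: complex mat"
  have C: "?C \<in> carrier_mat n n" using A by simp
  obtain as where as: "char_poly ?C = (\<Prod>a\<leftarrow>as. [:-a, 1:])" "length as = n"
    using char_poly_factorized[OF C] by auto
  have re: "a = complex_of_real (Re a)" if a: "a \<in> set as" for a
  proof -
    have "poly (char_poly ?C) a = 0" unfolding as(1) using a
      by (simp add: poly_prod_list prod_list_zero_iff)
    hence "eigenvalue ?C a" using eigenvalue_root_char_poly[OF C] by simp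
    hence "Im a = 0" using sym_eig_real[OF A sym] by blast
    thus ?thesis by (simp add: complex_eq_iff)
  qed
  have hc: "char_poly ?C = map_poly complex_of_real (char_poly A)" by (rule of_real_hom.char_poly_hom[OF A])
  have "map_poly complex_of_real (char_poly A) = (\<Prod>a\<leftarrow>as. [:-a, 1:])"
    using hc as(1) by simp
  also have "\<dots> = (\<Prod>a\<leftarrow>map Re as. [:- complex_of_real a, 1:])"
    by (simp add: o_def, rule arg_cong[where f=prod_list], rule map_cong, simp, subst re, auto)
  also have "\<dots> = map_poly complex_of_real (\<Prod>a\<leftarrow>map Re as. [:-a, 1:])"
    by (induction as) (simp_all add: of_real_poly_hom.hom_mult del: mult_pCons_left mult_pCons_right)
  finally have "char_poly A = (\<Prod>a\<leftarrow>map Re as. [:-a, 1:])" by (rule map_poly_of_real_inj)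
  thus ?thesis using as(2) by (intro exI[of _ "map Re as"]) simp
qed

definition pj :: "nat \<Rightarrow> real vec list \<Rightarrow> real mat" where
  "pj n us = mat n n (\<lambda>(i,j). (if i = j then 1 else 0) - (\<Sum>l<length us. (us!l)$i * (us!l)$j))"

definition orthon :: "nat \<Rightarrow> real vec list \<Rightarrow> bool" where
  "orthon n us \<longleftrightarrow> set us \<subseteq> carrier_vec n \<and>
     (\<forall>i<length us. \<forall>j<length us. us!i \<bullet> us!j = (if i = j then 1 else 0))"

lemma pj_carrier[simp]: "pj n us \<in> carrier_mat n n" unfolding pj_def by simp

lemma pj_mult:
  assumes x: "x \<in> carrier_vec n" and us: "set us \<subseteq> carrier_vec n"
  shows "pj n us *\<^sub>v x = vec n (\<lambda>i. x$i - (\<Sum>l<length us. (us!l \<bullet> x) * (us!l)$i))"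
proof (rule eq_vecI)
  fix i assume i: "i < dim_vec (vec n (\<lambda>i. x$i - (\<Sum>l<length us. (us!l \<bullet> x) * (us!l)$i)))"
  hence i: "i < n" by simp
  have ul: "dim_vec (us!l) = n" if "l < length us" for l using us that by (meson carrier_vecD nth_mem subsetD)
  have "(pj n us *\<^sub>v x) $ i = (\<Sum>j<n. ((if i = j then 1 else 0) - (\<Sum>l<length us. (us!l)$i * (us!l)$j)) * x$j)"
    using i x by (simp add: pj_def scalar_prod_def row_def lessThan_atLeast0)
  also have "\<dots> = (\<Sum>j<n. (if i = j then 1 else 0) * x$j) - (\<Sum>j<n. \<Sum>l<length us. (us!l)$i * (us!l)$j * x$j)"
    by (simp add: left_diff_distrib sum_subtractf sum_distrib_right)
  also have "(\<Sum>j<n. (if i = j then 1 else 0) * x$j) = x$i" using i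
    by (simp add: of_bool_def[symmetric] sum.delta)
  also have "(\<Sum>j<n. \<Sum>l<length us. (us!l)$i * (us!l)$j * x$j) = (\<Sum>l<length us. (us!l \<bullet> x) * (us!l)$i)"
    by (subst sum.swap) (auto intro!: sum.cong simp: scalar_prod_def ul carrier_vecD[OF x] sum_distrib_left sum_distrib_right lessThan_atLeast0 mult_ac)
  finally show "(pj n us *\<^sub>v x) $ i = vec n (\<lambda>i. x$i - (\<Sum>l<length us. (us!l \<bullet> x) * (us!l)$i)) $ i"
    using i by simp
qed (simp add: pj_def)

lemma orthon_carrier: "orthon n us \<Longrightarrow> l < length us \<Longrightarrow> us!l \<in> carrier_vec n"
  unfolding orthon_def by (meson nth_mem subsetD)

lemma pj_orth:
  assumes o: "orthon n us" and x: "x \<in> carrier_vec n" and k: "k < length us"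
  shows "(pj n us *\<^sub>v x) \<bullet> us!k = 0"
proof -
  have us: "set us \<subseteq> carrier_vec n" using o unfolding orthon_def by auto
  have ul: "dim_vec (us!l) = n" if "l < length us" for l using orthon_carrier[OF o that] by simp
  let ?c = "\<lambda>l. us!l \<bullet> x"
  have "(pj n us *\<^sub>v x) \<bullet> us!k = (\<Sum>i<n. (x$i - (\<Sum>l<length us. ?c l * (us!l)$i)) * (us!k)$i)"
    unfolding pj_mult[OF x us] by (simp add: scalar_prod_def ul[OF k] lessThan_atLeast0)
  also have "\<dots> = (\<Sum>i<n. x$i * (us!k)$i) - (\<Sum>l<length us. ?c l * (\<Sum>i<n. (us!l)$i * (us!k)$i))"
  proof -
    have "(\<Sum>i<n. (x$i - (\<Sum>l<length us. ?c l * (us!l)$i)) * (us!k)$i)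
       = (\<Sum>i<n. x$i * (us!k)$i) - (\<Sum>i<n. (\<Sum>l<length us. ?c l * (us!l)$i) * (us!k)$i)"
      by (simp add: left_diff_distrib sum_subtractf)
    also have "(\<Sum>i<n. (\<Sum>l<length us. ?c l * (us!l)$i) * (us!k)$i) = (\<Sum>i<n. \<Sum>l<length us. ?c l * ((us!l)$i * (us!k)$i))"
      by (rule sum.cong, simp, simp add: sum_distrib_left mult_ac)
    also have "\<dots> = (\<Sum>l<length us. \<Sum>i<n. ?c l * ((us!l)$i * (us!k)$i))" by (rule sum.swap)
    also have "\<dots> = (\<Sum>l<length us. ?c l * (\<Sum>i<n. (us!l)$i * (us!k)$i))" by (simp add: sum_distrib_left)
    finally show ?thesis .
  qed
  also have "(\<Sum>i<n. x$i * (us!k)$i) = ?c k"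
    using x ul[OF k] by (simp add: scalar_prod_def lessThan_atLeast0 mult_ac)
  also have "(\<Sum>l<length us. ?c l * (\<Sum>i<n. (us!l)$i * (us!k)$i)) = (\<Sum>l<length us. ?c l * (if l = k then 1 else 0))"
  proof (rule sum.cong)
    fix l assume l: "l \<in> {..<length us}"
    have "(\<Sum>i<n. (us!l)$i * (us!k)$i) = us!l \<bullet> us!k" using ul[OF k] by (simp add: scalar_prod_def lessThan_atLeast0)
    also have "\<dots> = (if l = k then 1 else 0)" using o l k unfolding orthon_def by auto
    finally show "?c l * (\<Sum>i<n. (us!l)$i * (us!k)$i) = ?c l * (if l = k then 1 else 0)" by simp
  qed simp
  also have "\<dots> = ?c k" using k by (simp add: of_bool_def[symmetric] sum.delta)
  finally show ?thesis by simp
qed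

lemma pj_id:
  assumes o: "orthon n us" and x: "x \<in> carrier_vec n" and z: "\<And>k. k < length us \<Longrightarrow> us!k \<bullet> x = 0"
  shows "pj n us *\<^sub>v x = x"
proof -
  have us: "set us \<subseteq> carrier_vec n" using o unfolding orthon_def by auto
  show ?thesis unfolding pj_mult[OF x us] using x z by (intro eq_vecI) auto
qed

lemma pj_sym: "transpose_mat (pj n us) = pj n us"
  by (rule eq_matI) (auto simp: pj_def mult.commute)

context
  fixes A :: "real mat" and n :: nat
  assumes A: "A \<in> carrier_mat n n" and symA: "transpose_mat A = A"
begin

lemma symA_entry: "i < n \<Longrightarrow> j < n \<Longrightarrow> A $$ (i,j) = A $$ (j,i)"
  using A by (metis carrier_matD index_transpose_mat(1) symA)

lemma symA_prod: "x \<in> carrier_vec n \<Longrightarrow> y \<in> carrier_vec n \<Longrightarrow> (A *\<^sub>v x) \<bullet> y = x \<bullet> (A *\<^sub>v y)"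
  using transpose_vec_mult_scalar[OF A, of y x] symA by (metis A comm_scalar_prod mult_mat_vec_carrier)

end

definition tr :: "nat \<Rightarrow> real mat \<Rightarrow> real" where
  "tr n M = (\<Sum>i<n. M $$ (i,i))"

lemma tr_mult: "X \<in> carrier_mat n n \<Longrightarrow> Y \<in> carrier_mat n n \<Longrightarrow>
   tr n (X * Y) = (\<Sum>i<n. \<Sum>j<n. X $$ (i,j) * Y $$ (j,i))"
  unfolding tr_def by (auto intro!: sum.cong simp: scalar_prod_def lessThan_atLeast0)

lemma tr_comm: assumes "X \<in> carrier_mat n n" "Y \<in> carrier_mat n n"
  shows "tr n (X * Y) = tr n (Y * X)"
  unfolding tr_mult[OF assms] tr_mult[OF assms(2,1)]
  by (subst sum.swap) (simp add: mult.commute)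

lemma sym_similar_strict_zero:
  fixes B T :: "real mat"
  assumes B: "B \<in> carrier_mat n n" and symB: "transpose_mat B = B"
    and sim: "similar_mat B T" and ut: "upper_triangular T"
    and d0: "\<And>i. i < n \<Longrightarrow> T $$ (i,i) = 0"
  shows "B = 0\<^sub>m n n"
proof -
  obtain m P Q where PQ: "{B,T,P,Q} \<subseteq> carrier_mat m m" "P * Q = 1\<^sub>m m" "Q * P = 1\<^sub>m m" "B = P * T * Q"
    using similar_matD[OF sim] by blast
  have m: "m = n" using PQ(1) B by auto
  have P: "P \<in> carrier_mat n n" and Q: "Q \<in> carrier_mat n n" and T: "T \<in> carrier_mat n n"
    using PQ(1) m by auto
  have QP: "Q * P = 1\<^sub>m n" using PQ(3) m by simp
  have "B * B = P * T * (Q * P) * T * Q"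
    using P Q T PQ(4) by (simp add: assoc_mult_mat[of _ n n _ n _ n])
  also have "\<dots> = P * ((T * T) * Q)" using P Q T QP by (simp add: assoc_mult_mat[of _ n n _ n _ n])
  finally have BB: "B * B = P * ((T * T) * Q)" .
  have "tr n (B * B) = tr n (((T * T) * Q) * P)" unfolding BB
    by (rule tr_comm) (use P Q T in auto)
  also have "((T * T) * Q) * P = T * T" using P Q T QP by (simp add: assoc_mult_mat[of _ n n _ n _ n])
  also have "tr n (T * T) = 0"
  proof -
    have "T $$ (i,j) * T $$ (j,i) = 0" if "i < n" "j < n" for i j
    proof (cases "i = j")
      case True thus ?thesis using d0 that by simp
    next
      case False
      then consider "j < i" | "i < j" by linarith
      thus ?thesis
      proof cases
        case 1 thus ?thesis using ut that T by (simp add: upper_triangularD)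
      next
        case 2 thus ?thesis using ut that T by (simp add: upper_triangularD)
      qed
    qed
    hence "(\<Sum>i<n. \<Sum>j<n. T $$ (i, j) * T $$ (j, i)) = (\<Sum>i<n. \<Sum>j<n. (0::real))"
      by (intro sum.cong refl) auto
    thus ?thesis unfolding tr_mult[OF T T] by simp
  qed
  finally have tr0: "tr n (B * B) = 0" .
  have symE: "B $$ (j,i) = B $$ (i,j)" if "i < n" "j < n" for i j
    using B that by (metis carrier_matD index_transpose_mat(1) symB)
  have "(\<Sum>i<n. \<Sum>j<n. (B $$ (i,j))^2) = 0"
    using tr0 unfolding tr_mult[OF B B] by (simp add: symE power2_eq_square)
  hence z: "\<forall>i\<in>{..<n}. (\<Sum>j<n. (B $$ (i,j))^2) = 0"
    by (subst (asm) sum_nonneg_eq_0_iff) (auto intro: sum_nonneg)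
  show ?thesis
  proof (rule eq_matI)
    fix i j assume i: "i < dim_row (0\<^sub>m n n :: real mat)" and j: "j < dim_col (0\<^sub>m n n :: real mat)"
    hence "\<forall>j\<in>{..<n}. (B $$ (i,j))^2 = 0" using z
      by (subst sum_nonneg_eq_0_iff[symmetric]) auto
    thus "B $$ (i,j) = 0\<^sub>m n n $$ (i,j)" using i j by simp
  qed (use B in auto)
qed

lemma poly_prod_lin_root:
  fixes d :: real
  shows "poly (\<Prod>a\<leftarrow>es. [:-a, 1:]) d = 0 \<longleftrightarrow> d \<in> set es"
  by (induction es) auto

lemma vec_self_pos:
  fixes x :: "real vec"
  assumes x: "x \<in> carrier_vec n" and nz: "x \<noteq> 0\<^sub>v n"
  shows "x \<bullet> x > 0"
proof -
  obtain i where i: "i < n" "x $ i \<noteq> 0" using x nz by (metis carrier_vecD eq_vecI index_zero_vec(1) index_zero_vec(2))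
  have s: "x \<bullet> x = (\<Sum>j<n. (x$j)^2)" using x by (simp add: scalar_prod_def lessThan_atLeast0 power2_eq_square)
  have le: "(x$i)^2 \<le> (\<Sum>j<n. (x$j)^2)" by (rule member_le_sum) (use i in auto)
  have "(x$i)^2 > 0" using i by simp
  hence "0 < (\<Sum>j<n. (x$j)^2)" using le by (rule less_le_trans)
  thus ?thesis by (simp only: s)
qed

lemma pj_dim_row[simp]: "dim_row (pj n us) = n"
  using pj_carrier[of n us] by (rule carrier_matD)

lemma pj_vec_carrier[simp]: "pj n us *\<^sub>v x \<in> carrier_vec n"
  unfolding carrier_vec_def by simp

context
  fixes A :: "real mat" and n :: nat
  assumes A: "A \<in> carrier_mat n n" and symA: "transpose_mat A = A"
begin

lemma A_vec_carrier[simp]: "A *\<^sub>v x \<in> carrier_vec n"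
  unfolding carrier_vec_def using A by simp

lemma eig_step:
  assumes o: "orthon n us" and len: "length us < n"
    and eig: "\<And>k. k < length us \<Longrightarrow> \<exists>\<mu>. A *\<^sub>v (us!k) = \<mu> \<cdot>\<^sub>v (us!k)"
  shows "\<exists>x \<mu>. x \<in> carrier_vec n \<and> x \<bullet> x = 1 \<and> (\<forall>k<length us. us!k \<bullet> x = 0) \<and> A *\<^sub>v x = \<mu> \<cdot>\<^sub>v x"
proof -
  let ?P = "pj n us"
  define B where "B = ?P * A * ?P"
  have P: "?P \<in> carrier_mat n n" by simp
  have B: "B \<in> carrier_mat n n" unfolding B_def using A P by (meson mult_carrier_mat)
  have symB: "transpose_mat B = B"
  proof -
    have PA: "?P * A \<in> carrier_mat n n" using A P by (meson mult_carrier_mat)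
    have "transpose_mat B = transpose_mat ?P * transpose_mat (?P * A)"
      unfolding B_def by (rule transpose_mult[OF PA P])
    also have "transpose_mat (?P * A) = transpose_mat A * transpose_mat ?P"
      by (rule transpose_mult[OF P A])
    also have "transpose_mat ?P * (transpose_mat A * transpose_mat ?P) = ?P * (A * ?P)"
      unfolding symA pj_sym ..
    also have "\<dots> = B" unfolding B_def by (rule assoc_mult_mat[OF P A P, symmetric])
    finally show ?thesis .
  qed
  have us: "set us \<subseteq> carrier_vec n" using o unfolding orthon_def by auto
  have Bv: "B *\<^sub>v x = ?P *\<^sub>v (A *\<^sub>v (?P *\<^sub>v x))" if x: "x \<in> carrier_vec n" for x
  proof -
    have PA: "?P * A \<in> carrier_mat n n" using A P by (meson mult_carrier_mat)
    have "B *\<^sub>v x = (?P * A) *\<^sub>v (?P *\<^sub>v x)" unfolding B_def by (rule assoc_mult_mat_vec[OF PA P x])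
    also have "\<dots> = ?P *\<^sub>v (A *\<^sub>v (?P *\<^sub>v x))" by (rule assoc_mult_mat_vec[OF P A]) (use P x in simp)
    finally show ?thesis .
  qed
  have orthP: "us!k \<bullet> (?P *\<^sub>v y) = 0" if "y \<in> carrier_vec n" "k < length us" for y k
    using pj_orth[OF o that] comm_scalar_prod[OF orthon_carrier[OF o that(2)], of "?P *\<^sub>v y"] that P
    by simp
  have orthA: "us!k \<bullet> (A *\<^sub>v x) = 0"
    if x: "x \<in> carrier_vec n" and ox: "\<forall>k<length us. us!k \<bullet> x = 0" and k: "k < length us" for x k
  proof -
    obtain \<mu> where mu: "A *\<^sub>v (us!k) = \<mu> \<cdot>\<^sub>v (us!k)" using eig[OF k] by blast
    have uk: "us!k \<in> carrier_vec n" by (rule orthon_carrier[OF o k])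
    have "us!k \<bullet> (A *\<^sub>v x) = (A *\<^sub>v us!k) \<bullet> x" using symA_prod[OF A symA uk x] by simp
    also have "\<dots> = \<mu> * (us!k \<bullet> x)" unfolding mu using uk x by simp
    finally show ?thesis using ox k by simp
  qed
  have BA: "B *\<^sub>v x = A *\<^sub>v x" if x: "x \<in> carrier_vec n" and ox: "\<forall>k<length us. us!k \<bullet> x = 0" for x
  proof -
    have "?P *\<^sub>v x = x" by (rule pj_id[OF o x]) (use ox in auto)
    moreover have "?P *\<^sub>v (A *\<^sub>v x) = A *\<^sub>v x"
      by (rule pj_id[OF o]) (use A x orthA[OF x ox] in auto)
    ultimately show ?thesis using Bv[OF x] by simp
  qed
  have ex: "\<exists>x \<mu>. x \<in> carrier_vec n \<and> x \<noteq> 0\<^sub>v n \<and> (\<forall>k<length us. us!k \<bullet> x = 0) \<and> A *\<^sub>v x = \<mu> \<cdot>\<^sub>v x"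
  proof -
    have symBe: "\<And>i j. i < n \<Longrightarrow> j < n \<Longrightarrow> B $$ (i,j) = B $$ (j,i)"
      using B by (metis carrier_matD index_transpose_mat(1) symB)
    obtain es where es: "char_poly B = (\<Prod>a\<leftarrow>es. [:-a, 1:])" "length es = n"
      using sym_char_poly_split[OF B symBe] by blast
    show ?thesis
    proof (cases "\<exists>e\<in>set es. e \<noteq> 0")
      case True
      then obtain e where e: "e \<in> set es" "e \<noteq> 0" by blast
      have "poly (char_poly B) e = 0" unfolding es(1) using e poly_prod_lin_root by blast
      hence "eigenvalue B e" using eigenvalue_root_char_poly[OF B] by simp
      then obtain x where x: "x \<in> carrier_vec n" "x \<noteq> 0\<^sub>v n" "B *\<^sub>v x = e \<cdot>\<^sub>v x"
        unfolding eigenvalue_def eigenvector_def using B by auto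
      have ox: "\<forall>k<length us. us!k \<bullet> x = 0"
      proof (intro allI impI)
        fix k assume k: "k < length us"
        have uk: "us!k \<in> carrier_vec n" by (rule orthon_carrier[OF o k])
        have "x = (1/e) \<cdot>\<^sub>v (B *\<^sub>v x)" using x(3) e(2) by (simp add: smult_smult_assoc)
        hence "us!k \<bullet> x = (1/e) * (us!k \<bullet> (?P *\<^sub>v (A *\<^sub>v (?P *\<^sub>v x))))"
          using Bv[OF x(1)] uk B x(1) by (metis scalar_prod_smult_distrib mult_mat_vec_carrier)
        also have "\<dots> = 0" using orthP[of "A *\<^sub>v (?P *\<^sub>v x)" k] A P x(1) k by simp
        finally show "us!k \<bullet> x = 0" .
      qed
      show ?thesis using x ox BA[OF x(1) ox] by metis
    next
      case False
      define T where "T = schur_upper_triangular B es"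
      have T: "T \<in> carrier_mat n n" "upper_triangular T" "similar_mat B T"
        using schur_upper_triangular[OF B es(1)] unfolding T_def by auto
      have d0: "T $$ (i,i) = 0" if i: "i < n" for i
      proof -
        have "T $$ (i,i) \<in> set (diag_mat T)" using i T(1) unfolding diag_mat_def by auto
        hence "poly (char_poly T) (T $$ (i,i)) = 0"
          unfolding char_poly_upper_triangular[OF T(1,2)] using poly_prod_lin_root by blast
        hence "poly (char_poly B) (T $$ (i,i)) = 0" using char_poly_similar[OF T(3)] by simp
        hence "T $$ (i,i) \<in> set es" unfolding es(1) using poly_prod_lin_root by blast
        thus ?thesis using False by auto
      qed
      have B0: "B = 0\<^sub>m n n" by (rule sym_similar_strict_zero[OF B symB T(3) T(2) d0])
      define m where "m = length us"
      have "(\<Sum>j<n. (1 - (\<Sum>l<m. ((us!l)$j)^2))) = real n - (\<Sum>l<m. \<Sum>j<n. ((us!l)$j)^2)"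
        by (simp add: sum_subtractf) (rule sum.swap)
      also have "(\<Sum>l<m. \<Sum>j<n. ((us!l)$j)^2) = (\<Sum>l<m. (1::real))"
      proof (rule sum.cong)
        fix l assume l: "l \<in> {..<m}"
        have ul: "us!l \<in> carrier_vec n" using orthon_carrier[OF o] l unfolding m_def by auto
        have "us!l \<bullet> us!l = 1" using o l unfolding orthon_def m_def by auto
        thus "(\<Sum>j<n. ((us!l)$j)^2) = 1" using ul
          by (simp add: scalar_prod_def lessThan_atLeast0 power2_eq_square)
      qed simp
      finally have "(\<Sum>j<n. (1 - (\<Sum>l<m. ((us!l)$j)^2))) = real n - real m" by simp
      also have "\<dots> \<noteq> 0" using len unfolding m_def by simp
      finally obtain j where j: "j < n" "1 - (\<Sum>l<m. ((us!l)$j)^2) \<noteq> 0"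
        by (metis (no_types, lifting) lessThan_iff sum.neutral)
      define x where "x = ?P *\<^sub>v unit_vec n j"
      have x: "x \<in> carrier_vec n" unfolding x_def using P by simp
      have "x $ j = 1 - (\<Sum>l<m. ((us!l)$j)^2)"
        unfolding x_def pj_mult[OF unit_vec_carrier us] using j orthon_carrier[OF o]
        by (simp add: m_def power2_eq_square)
      hence xnz: "x \<noteq> 0\<^sub>v n" using j by auto
      have ox: "\<forall>k<length us. us!k \<bullet> x = 0" unfolding x_def using orthP by simp
      have "A *\<^sub>v x = 0\<^sub>m n n *\<^sub>v x" using BA[OF x ox] B0 by simp
      also have "\<dots> = 0 \<cdot>\<^sub>v x" using x by (intro eq_vecI) (auto simp: scalar_prod_def)
      finally have "A *\<^sub>v x = 0 \<cdot>\<^sub>v x" .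
      thus ?thesis using x xnz ox by blast
    qed
  qed
  then obtain x \<mu> where x: "x \<in> carrier_vec n" "x \<noteq> 0\<^sub>v n" "\<forall>k<length us. us!k \<bullet> x = 0" "A *\<^sub>v x = \<mu> \<cdot>\<^sub>v x"
    by blast
  have pos: "x \<bullet> x > 0" by (rule vec_self_pos[OF x(1,2)])
  define c where "c = 1 / sqrt (x \<bullet> x)"
  define y where "y = c \<cdot>\<^sub>v x"
  have y: "y \<in> carrier_vec n" unfolding y_def using x by simp
  have "y \<bullet> y = c * c * (x \<bullet> x)" unfolding y_def using x(1) by simp
  also have "\<dots> = 1" unfolding c_def using pos
    by (simp add: field_simps)
  finally have yy: "y \<bullet> y = 1" .
  have oy: "\<forall>k<length us. us!k \<bullet> y = 0" unfolding y_def using x(1,3) orthon_carrier[OF o] by simp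
  have "A *\<^sub>v y = \<mu> \<cdot>\<^sub>v y" unfolding y_def using mult_mat_vec[OF A x(1)] x(4)
    by (simp add: smult_smult_assoc mult.commute)
  thus ?thesis using y yy oy by blast
qed

end

context
  fixes A :: "real mat" and n :: nat
  assumes A: "A \<in> carrier_mat n n" and symA: "transpose_mat A = A"
begin

lemma eig_list:
  assumes "m \<le> n"
  shows "\<exists>us ms. length us = m \<and> length ms = m \<and> orthon n us \<and> (\<forall>k<m. A *\<^sub>v (us!k) = (ms!k) \<cdot>\<^sub>v (us!k))"
  using assms
proof (induction m)
  case 0
  show ?case by (rule exI[of _ "[]"], rule exI[of _ "[]"]) (simp add: orthon_def)
next
  case (Suc m)
  then obtain us ms where IH: "length us = m" "length ms = m" "orthon n us" "\<forall>k<m. A *\<^sub>v (us!k) = (ms!k) \<cdot>\<^sub>v (us!k)"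
    by auto
  obtain x \<mu> where x: "x \<in> carrier_vec n" "x \<bullet> x = 1" "\<forall>k<length us. us!k \<bullet> x = 0" "A *\<^sub>v x = \<mu> \<cdot>\<^sub>v x"
    using eig_step[OF A symA IH(3)] IH Suc(2) by auto
  let ?us = "us @ [x]" and ?ms = "ms @ [\<mu>]"
  have o: "orthon n ?us"
    unfolding orthon_def
  proof (intro conjI allI impI)
    show "set ?us \<subseteq> carrier_vec n" using IH(3) x(1) unfolding orthon_def by auto
    fix i j assume i: "i < length ?us" and j: "j < length ?us"
    have ui: "i < m \<Longrightarrow> us!i \<in> carrier_vec n" using orthon_carrier[OF IH(3)] IH(1) by auto
    have uj: "j < m \<Longrightarrow> us!j \<in> carrier_vec n" using orthon_carrier[OF IH(3)] IH(1) by auto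
    show "?us!i \<bullet> ?us!j = (if i = j then 1 else 0)"
    proof (cases "i < m")
      case True
      show ?thesis
      proof (cases "j < m")
        case True
        thus ?thesis using \<open>i < m\<close> IH(1,3) unfolding orthon_def by (auto simp: nth_append)
      next
        case False
        hence "j = m" using j IH(1) by simp
        thus ?thesis using \<open>i < m\<close> IH(1) x(3) by (auto simp: nth_append)
      qed
    next
      case False
      hence im: "i = m" using i IH(1) by simp
      show ?thesis
      proof (cases "j < m")
        case True
        thus ?thesis using im IH(1) x(3) comm_scalar_prod[OF x(1) uj] by (auto simp: nth_append)
      next
        case False
        hence "j = m" using j IH(1) by simp
        thus ?thesis using im IH(1) x(2) by (auto simp: nth_append)
      qed
    qed
  qed
  show ?case
    by (rule exI[of _ ?us], rule exI[of _ ?ms]) (use IH x o in \<open>auto simp: nth_append less_Suc_eq\<close>)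
qed

lemma spectral:
  "\<exists>us ms. length us = n \<and> length ms = n \<and> orthon n us \<and>
     (\<forall>k<n. A *\<^sub>v (us!k) = (ms!k) \<cdot>\<^sub>v (us!k)) \<and>
     char_poly A = (\<Prod>a\<leftarrow>ms. [:-a, 1:]) \<and>
     (\<forall>y\<in>carrier_vec n. y \<bullet> y = (\<Sum>k<n. (us!k \<bullet> y)^2) \<and>
         y \<bullet> (A *\<^sub>v y) = (\<Sum>k<n. ms!k * (us!k \<bullet> y)^2))"
proof -
  obtain us ms where L: "length us = n" "length ms = n" "orthon n us" "\<forall>k<n. A *\<^sub>v (us!k) = (ms!k) \<cdot>\<^sub>v (us!k)"
    using eig_list[of n] by auto
  have uc: "k < n \<Longrightarrow> us!k \<in> carrier_vec n" for k using orthon_carrier[OF L(3)] L(1) by auto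
  define U where "U = mat n n (\<lambda>(i,j). (us!j)$i)"
  define D where "D = mat n n (\<lambda>(i,j). if i = j then ms!i else 0)"
  have U: "U \<in> carrier_mat n n" and UT: "transpose_mat U \<in> carrier_mat n n" and D: "D \<in> carrier_mat n n"
    unfolding U_def D_def by auto
  have colU: "col U j = us!j" if "j < n" for j
    using uc[OF that] that unfolding U_def by (intro eq_vecI) auto
  have UTU: "transpose_mat U * U = 1\<^sub>m n"
  proof (rule eq_matI)
    fix i j assume i: "i < dim_row (1\<^sub>m n :: real mat)" and j: "j < dim_col (1\<^sub>m n :: real mat)"
    have "(transpose_mat U * U) $$ (i,j) = col U i \<bullet> col U j" using i j U by simp
    also have "\<dots> = us!i \<bullet> us!j" using i j colU by simp
    also have "\<dots> = 1\<^sub>m n $$ (i,j)" using L(1,3) i j unfolding orthon_def by auto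
    finally show "(transpose_mat U * U) $$ (i,j) = 1\<^sub>m n $$ (i,j)" .
  qed (use U in auto)
  have UUT: "U * transpose_mat U = 1\<^sub>m n" by (rule mat_mult_left_right_inverse[OF UT U UTU])
  have AU: "A * U = U * D"
  proof (rule eq_matI)
    fix i j assume i: "i < dim_row (U * D)" and j: "j < dim_col (U * D)"
    hence i: "i < n" and j: "j < n" using U D by auto
    have "(A * U) $$ (i,j) = (A *\<^sub>v us!j) $ i" using i j A U colU by simp
    also have "\<dots> = ms!j * (us!j)$i" using L(4) j i uc[OF j] by simp
    also have "\<dots> = (U * D) $$ (i,j)"
    proof -
      have "(U * D) $$ (i,j) = (\<Sum>k<n. U $$ (i,k) * D $$ (k,j))"
        using i j U D by (simp add: scalar_prod_def lessThan_atLeast0)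
      also have "\<dots> = (\<Sum>k<n. if k = j then U $$ (i,j) * ms!j else 0)"
        using i j by (intro sum.cong) (auto simp: D_def)
      also have "\<dots> = U $$ (i,j) * ms!j" using j by simp
      finally show ?thesis using i j by (simp add: U_def)
    qed
    finally show "(A * U) $$ (i,j) = (U * D) $$ (i,j)" .
  qed (use A U D in auto)
  have AUD: "A = U * D * transpose_mat U"
  proof -
    have "A = A * (U * transpose_mat U)" using A UUT by simp
    also have "\<dots> = (A * U) * transpose_mat U" using A U UT by (simp add: assoc_mult_mat[of _ n n _ n _ n])
    finally show ?thesis using AU by simp
  qed
  have "similar_mat A D"
    by (rule similar_matI[of _ _ U "transpose_mat U" n]) (use A U UT D UTU UUT AUD in auto)
  hence cpA: "char_poly A = char_poly D" by (rule char_poly_similar)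
  have "upper_triangular D" unfolding D_def upper_triangular_def by auto
  hence "char_poly D = (\<Prod>a\<leftarrow>diag_mat D. [:-a, 1:])" by (rule char_poly_upper_triangular[OF D])
  also have "diag_mat D = ms" unfolding diag_mat_def D_def using L(2)
    by (intro nth_equalityI) auto
  finally have cp: "char_poly A = (\<Prod>a\<leftarrow>ms. [:-a, 1:])" using cpA by simp
  have par: "y \<bullet> y = (\<Sum>k<n. (us!k \<bullet> y)^2) \<and> y \<bullet> (A *\<^sub>v y) = (\<Sum>k<n. ms!k * (us!k \<bullet> y)^2)"
    if y: "y \<in> carrier_vec n" for y
  proof -
    define z where "z = transpose_mat U *\<^sub>v y"
    have z: "z \<in> carrier_vec n" unfolding z_def using UT y by simp
    have zk: "z $ k = us!k \<bullet> y" if "k < n" for k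
      unfolding z_def using that U y colU by simp
    have yUz: "y = U *\<^sub>v z"
    proof -
      have "U *\<^sub>v z = (U * transpose_mat U) *\<^sub>v y" unfolding z_def using U UT y by simp
      thus ?thesis using UUT y by simp
    qed
    have "y \<bullet> y = y \<bullet> (U *\<^sub>v z)" using yUz by simp
    also have "\<dots> = z \<bullet> z" using transpose_vec_mult_scalar[OF U z y] by (simp add: z_def[symmetric])
    also have "\<dots> = (\<Sum>k<n. (us!k \<bullet> y)^2)" using z zk by (simp add: scalar_prod_def lessThan_atLeast0 power2_eq_square)
    finally have 1: "y \<bullet> y = (\<Sum>k<n. (us!k \<bullet> y)^2)" .
    have Dz: "D *\<^sub>v z \<in> carrier_vec n" using D z by simp
    have "A *\<^sub>v y = (U * D * transpose_mat U) *\<^sub>v y" using AUD by simp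
    also have "\<dots> = U *\<^sub>v (D *\<^sub>v z)" unfolding z_def using U D UT y
      by (simp add: assoc_mult_mat_vec[of _ n n _ n])
    finally have "y \<bullet> (A *\<^sub>v y) = y \<bullet> (U *\<^sub>v (D *\<^sub>v z))" by simp
    also have "\<dots> = z \<bullet> (D *\<^sub>v z)" using transpose_vec_mult_scalar[OF U Dz y] by (simp add: z_def[symmetric])
    also have "\<dots> = (\<Sum>k<n. z$k * (ms!k * z$k))"
    proof -
      have "(D *\<^sub>v z) $ k = ms!k * z$k" if "k < n" for k
      proof -
        have "(D *\<^sub>v z) $ k = (\<Sum>l<n. D $$ (k,l) * z$l)" using that D z by (simp add: scalar_prod_def lessThan_atLeast0)
        also have "\<dots> = (\<Sum>l<n. if l = k then ms!k * z$k else 0)"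
          using that by (intro sum.cong) (auto simp: D_def)
        finally show ?thesis using that by simp
      qed
      thus ?thesis using z D by (simp add: scalar_prod_def lessThan_atLeast0)
    qed
    also have "\<dots> = (\<Sum>k<n. ms!k * (us!k \<bullet> y)^2)" using zk by (intro sum.cong) (auto simp: power2_eq_square)
    finally show ?thesis using 1 by simp
  qed
  show ?thesis using L cp par by blast
qed

end

lemma proots_lin_prod: "proots (\<Prod>a\<leftarrow>ms. [:-a, 1:]) = mset (ms :: real list)"
proof (induction ms)
  case (Cons a ms)
  have nz: "(\<Prod>a\<leftarrow>ms. [:-a, 1:]) \<noteq> (0 :: real poly)" by (auto simp: prod_list_zero_iff)
  have "proots ([:-a, 1:] * (\<Prod>a\<leftarrow>ms. [:-a, 1:])) = proots [:-a, 1:] + proots (\<Prod>a\<leftarrow>ms. [:-a, 1:])"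
    by (rule proots_mult) (use nz in auto)
  thus ?case using Cons by simp
qed simp

lemma length_filter_sort: "length (filter P (sort xs)) = length (filter P (xs :: real list))"
  by (metis mset_filter mset_sort size_mset)

lemma sort_second_le:
  fixes xs :: "real list"
  assumes "length (filter (\<lambda>x. x \<le> t) xs) \<ge> 2"
  shows "sort xs ! 1 \<le> t"
proof (rule ccontr)
  assume c: "\<not> sort xs ! 1 \<le> t"
  let ?ys = "sort xs"
  have len: "length (filter (\<lambda>x. x \<le> t) ?ys) \<ge> 2" using assms length_filter_sort by metis
  hence "length ?ys \<ge> 2" by (meson le_trans length_filter_le)
  then obtain a b rest where ys: "?ys = a # b # rest"
    by (metis One_nat_def Suc_1 Suc_le_length_iff)
  have s: "sorted (a # b # rest)" using ys by (metis sorted_sort)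
  have bt: "b > t" using c ys by simp
  have "\<forall>x\<in>set rest. x > t" using s bt by auto
  hence "filter (\<lambda>x. x \<le> t) rest = []" by (auto simp: filter_empty_conv)
  hence "length (filter (\<lambda>x. x \<le> t) ?ys) \<le> 1" using ys bt by simp
  thus False using len by simp
qed

lemma sort_second_ge:
  fixes xs :: "real list"
  assumes "length (filter (\<lambda>x. x < c) xs) \<le> 1" and "length xs \<ge> 2"
  shows "sort xs ! 1 \<ge> c"
proof (rule ccontr)
  assume cc: "\<not> sort xs ! 1 \<ge> c"
  let ?ys = "sort xs"
  have "length ?ys \<ge> 2" using assms(2) by simp
  then obtain a b rest where ys: "?ys = a # b # rest"
    by (metis One_nat_def Suc_1 Suc_le_length_iff)
  have s: "sorted (a # b # rest)" using ys by (metis sorted_sort)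
  have "b < c" using cc ys by simp
  moreover have "a \<le> b" using s by simp
  ultimately have "length (filter (\<lambda>x. x < c) ?ys) \<ge> 2" using ys by simp
  thus False using assms(1) length_filter_sort by (metis not_numeral_le_zero le_trans numeral_le_one_iff semiring_norm(69))
qed

lemma lap_carrier[simp]: "laplacian N E \<in> carrier_mat N N"
  unfolding laplacian_def by simp

lemma lap_dim[simp]: "dim_row (laplacian N E) = N" "dim_col (laplacian N E) = N"
  unfolding laplacian_def by simp_all

lemma lap_sym: assumes "\<And>i j. E i j = E j i" shows "transpose_mat (laplacian N E) = laplacian N E"
  by (rule eq_matI) (auto simp: laplacian_def assms)

lemma lap_row:
  assumes irr: "\<And>i. \<not> E i i" and y: "y \<in> carrier_vec N" and i: "i < N"
  shows "(laplacian N E *\<^sub>v y) $ i = (\<Sum>j<N. if E i j then y$i - y$j else 0)"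
proof -
  have "(laplacian N E *\<^sub>v y) $ i = (\<Sum>j<N. laplacian N E $$ (i,j) * y$j)"
    using i y by (simp add: scalar_prod_def lessThan_atLeast0)
  also have "\<dots> = (\<Sum>j<N. (if j = i then real (card {v \<in> {0..<N}. E i v}) * y$i else 0)
                         + (if E i j then - y$j else 0))"
    using i irr by (intro sum.cong) (auto simp: laplacian_def)
  also have "\<dots> = real (card {v \<in> {0..<N}. E i v}) * y$i + (\<Sum>j<N. if E i j then - y$j else 0)"
    using i by (simp add: sum.distrib)
  also have "real (card {v \<in> {0..<N}. E i v}) = (\<Sum>j<N. if E i j then 1 else 0)"
  proof -
    have "{v \<in> {0..<N}. E i v} = {..<N} \<inter> Collect (E i)" by auto
    thus ?thesis by (simp add: sum.If_cases)
  qed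
  also have "(\<Sum>j<N. if E i j then 1 else 0) * y$i + (\<Sum>j<N. if E i j then - y$j else 0)
      = (\<Sum>j<N. if E i j then y$i - y$j else 0)"
    by (simp add: sum_distrib_right sum.distrib[symmetric] if_distrib cong: if_cong)
  finally show ?thesis .
qed

lemma lap_quad:
  assumes irr: "\<And>i. \<not> E i i" and sym: "\<And>i j. E i j = E j i" and y: "y \<in> carrier_vec N"
  shows "2 * (y \<bullet> (laplacian N E *\<^sub>v y)) = (\<Sum>i<N. \<Sum>j<N. if E i j then (y$i - y$j)^2 else 0)"
proof -
  define S where "S = (\<Sum>i<N. \<Sum>j<N. if E i j then y$i * (y$i - y$j) else 0)"
  have 1: "y \<bullet> (laplacian N E *\<^sub>v y) = S"
    unfolding S_def using y lap_row[of E, OF irr y]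
    by (simp add: scalar_prod_def lessThan_atLeast0 sum_distrib_left if_distrib cong: if_cong)
  define S2 where "S2 = (\<Sum>i<N. \<Sum>j<N. if E i j then y$j * (y$j - y$i) else 0)"
  have "S = (\<Sum>j<N. \<Sum>i<N. if E i j then y$i * (y$i - y$j) else 0)" unfolding S_def by (rule sum.swap)
  also have "\<dots> = S2" unfolding S2_def
    by (intro sum.cong refl) (simp add: sym)
  finally have 2: "S = S2" .
  have "S + S2 = (\<Sum>i<N. \<Sum>j<N. (if E i j then y$i * (y$i - y$j) else 0) + (if E i j then y$j * (y$j - y$i) else 0))"
    unfolding S_def S2_def by (simp only: sum.distrib[symmetric])
  also have "\<dots> = (\<Sum>i<N. \<Sum>j<N. if E i j then (y$i - y$j)^2 else 0)"
    by (intro sum.cong refl) (simp add: power2_eq_square algebra_simps)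
  finally have "S + S = (\<Sum>i<N. \<Sum>j<N. if E i j then (y$i - y$j)^2 else 0)" using 2 by simp
  thus ?thesis using 1 by simp
qed

lemma split_lt2: "{..<2*n} = {..<n} \<union> {n..<2*(n::nat)}" by auto

lemma sum_split2: "(\<Sum>i<2*(n::nat). f i) = (\<Sum>i<n. f i) + (\<Sum>i\<in>{n..<2*n}. (f i :: real))"
  unfolding split_lt2 by (rule sum.union_disjoint) auto

lemma sq3: "((p::real) + q + r)^2 \<le> 3 * (p^2 + q^2 + r^2)"
proof -
  have "3 * (p^2 + q^2 + r^2) - (p+q+r)^2 = (p-q)^2 + (q-r)^2 + (p-r)^2"
    by (simp add: power2_eq_square algebra_simps)
  moreover have "0 \<le> (p-q)^2 + (q-r)^2 + (p-r)^2" by simp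
  ultimately show ?thesis by linarith
qed

lemma sum_sq_diff:
  "(\<Sum>i<N. \<Sum>j<N. ((y i :: real) - y j)^2) = 2 * real N * (\<Sum>i<N. (y i)^2) - 2 * (\<Sum>i<N. y i)^2"
proof -
  have "(\<Sum>i<N. \<Sum>j<N. (y i - y j)^2) = (\<Sum>i<N. \<Sum>j<N. (y i)^2 + (y j)^2 - 2 * (y i * y j))"
    by (simp add: power2_eq_square algebra_simps)
  also have "\<dots> = (\<Sum>i<N. real N * (y i)^2 + (\<Sum>j<N. (y j)^2) - 2 * (y i * (\<Sum>j<N. y j)))"
    by (simp add: sum.distrib sum_subtractf sum_distrib_left)
  also have "\<dots> = 2 * real N * (\<Sum>i<N. (y i)^2) - 2 * (\<Sum>i<N. y i)^2"
    by (simp add: sum.distrib sum_subtractf sum_distrib_left sum_distrib_right power2_eq_square algebra_simps)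
  finally show ?thesis .
qed

context
  fixes n k :: nat and F :: "(nat \<times> nat) set"
  assumes n1: "1 \<le> n" and Fsub: "F \<subseteq> {0..<n} \<times> {n..<2*n}" and cardF: "card F = k" and k1: "1 \<le> k"
begin

lemma E_irr: "\<not> D_adj n F i i"
  using Fsub unfolding D_adj_def by auto

lemma E_sym: "D_adj n F i j = D_adj n F j i"
  unfolding D_adj_def by auto

lemma E_11: "i < n \<Longrightarrow> j < n \<Longrightarrow> D_adj n F i j \<longleftrightarrow> i \<noteq> j"
  using Fsub unfolding D_adj_def by auto

lemma E_22: "n \<le> i \<Longrightarrow> i < 2*n \<Longrightarrow> n \<le> j \<Longrightarrow> j < 2*n \<Longrightarrow> D_adj n F i j \<longleftrightarrow> i \<noteq> j"
  using Fsub unfolding D_adj_def by auto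

lemma E_12: "i < n \<Longrightarrow> n \<le> j \<Longrightarrow> D_adj n F i j \<longleftrightarrow> (i,j) \<in> F"
  using Fsub unfolding D_adj_def by auto

lemma E_21: "n \<le> i \<Longrightarrow> j < n \<Longrightarrow> D_adj n F i j \<longleftrightarrow> (j,i) \<in> F"
  using Fsub unfolding D_adj_def by auto

lemma finF: "finite F" using cardF k1 card.infinite by force

lemma upper_test:
  fixes a b :: real
  defines "y \<equiv> vec (2*n) (\<lambda>i. a + b * (if i < n then 1 else -1))"
  shows "y \<bullet> (laplacian (2*n) (D_adj n F) *\<^sub>v y) = 4 * real k * b^2"
    and "y \<bullet> y = 2 * real n * (a^2 + b^2)"
proof -
  let ?E = "D_adj n F"
  have y: "y \<in> carrier_vec (2*n)" unfolding y_def by simp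
  have t: "(if ?E i j then (y$i - y$j)^2 else 0) = (if (i,j) \<in> F \<union> converse F then 4 * b^2 else 0)"
    if i: "i < 2*n" and j: "j < 2*n" for i j
  proof -
    consider "i < n" "j < n" | "i < n" "n \<le> j" | "n \<le> i" "j < n" | "n \<le> i" "n \<le> j" by linarith
    thus ?thesis
    proof cases
      case 1 thus ?thesis using i j Fsub unfolding y_def by auto
    next
      case 2 thus ?thesis using i j Fsub E_12[of i j] unfolding y_def by (auto simp: power2_eq_square)
    next
      case 3 thus ?thesis using i j Fsub E_21[of i j] unfolding y_def by (auto simp: power2_eq_square)
    next
      case 4 thus ?thesis using i j Fsub unfolding y_def by auto
    qed
  qed
  have "2 * (y \<bullet> (laplacian (2*n) ?E *\<^sub>v y)) = (\<Sum>i<2*n. \<Sum>j<2*n. if ?E i j then (y$i - y$j)^2 else 0)"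
    by (rule lap_quad[OF _ _ y]) (auto simp: E_irr E_sym)
  also have "\<dots> = (\<Sum>i<2*n. \<Sum>j<2*n. if (i,j) \<in> F \<union> converse F then 4 * b^2 else 0)"
    using t by (intro sum.cong refl) auto
  also have "\<dots> = (\<Sum>p\<in>{..<2*n} \<times> {..<2*n}. if p \<in> F \<union> converse F then 4 * b^2 else 0)"
    by (subst sum.cartesian_product) (auto intro!: sum.cong simp: case_prod_unfold)
  also have "\<dots> = 4 * b^2 * real (card (({..<2*n} \<times> {..<2*n}) \<inter> (F \<union> converse F)))"
    by (simp add: sum.If_cases Un_def)
  also have "({..<2*n} \<times> {..<2*n}) \<inter> (F \<union> converse F) = F \<union> converse F"
    using Fsub by auto
  also have "card (F \<union> converse F) = 2 * k"
  proof -
    have "F \<inter> converse F = {}"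
    proof (rule equals0I)
      fix p assume p: "p \<in> F \<inter> converse F"
      obtain u v where uv: "p = (u,v)" by (cases p)
      have "(u,v) \<in> F" "(v,u) \<in> F" using p uv by auto
      hence "v < n" "n \<le> v" using Fsub by auto
      thus False by simp
    qed
    hence "card (F \<union> converse F) = card F + card (converse F)"
      using finF by (simp add: card_Un_disjoint)
    moreover have "card (converse F) = card F" by simp
    ultimately show ?thesis using cardF by simp
  qed
  finally show "y \<bullet> (laplacian (2*n) ?E *\<^sub>v y) = 4 * real k * b^2" by simp
  have "y \<bullet> y = (\<Sum>i<2*n. (a + b * (if i < n then 1 else -1))^2)"
    unfolding y_def by (simp add: scalar_prod_def lessThan_atLeast0 power2_eq_square)
  also have "\<dots> = (\<Sum>i<n. (a + b)^2) + (\<Sum>i\<in>{n..<2*n}. (a - b)^2)"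
    unfolding sum_split2 by (intro arg_cong2[where f="(+)"] sum.cong) auto
  also have "\<dots> = 2 * real n * (a^2 + b^2)" by (simp add: power2_eq_square algebra_simps)
  finally show "y \<bullet> y = 2 * real n * (a^2 + b^2)" .
qed

lemma lower_quad:
  fixes y :: "real vec"
  assumes y: "y \<in> carrier_vec (2*n)" and s0: "(\<Sum>i<2*n. y$i) = 0"
  shows "2 / (3 * (2 * real n - 1)) * (y \<bullet> y) \<le> y \<bullet> (laplacian (2*n) (D_adj n F) *\<^sub>v y)"
proof -
  let ?E = "D_adj n F"
  define h where "h i j = (y$i - y$j)^2" for i j
  define g where "g i j = (if ?E i j then h i j else 0)" for i j
  have "F \<noteq> {}" using k1 cardF by auto
  then obtain a b where ab: "(a,b) \<in> F" by auto
  have a: "a < n" and b: "n \<le> b" "b < 2*n" using ab Fsub by auto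
  define Q1 where "Q1 = (\<Sum>i<n. \<Sum>j<n. h i j)"
  define Q2 where "Q2 = (\<Sum>i\<in>{n..<2*n}. \<Sum>j\<in>{n..<2*n}. h i j)"
  define C where "C = (\<Sum>i<n. \<Sum>j\<in>{n..<2*n}. h i j)"
  define d where "d = h a b"
  have hnn: "h i j \<ge> 0" for i j unfolding h_def by simp
  have gnn: "g i j \<ge> 0" for i j unfolding g_def using hnn by simp
  have hsym: "h i j = h j i" for i j unfolding h_def by (simp add: power2_commute)
  have split: "(\<Sum>i<2*n. \<Sum>j<2*n. f i j) = (\<Sum>i<n. \<Sum>j<n. f i j) + (\<Sum>i<n. \<Sum>j\<in>{n..<2*n}. f i j)
      + (\<Sum>i\<in>{n..<2*n}. \<Sum>j<n. f i j) + (\<Sum>i\<in>{n..<2*n}. \<Sum>j\<in>{n..<2*n}. f i j)" for f :: "nat \<Rightarrow> nat \<Rightarrow> real"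
    by (simp add: sum_split2 sum.distrib)
  define Q where "Q = (\<Sum>i<2*n. \<Sum>j<2*n. g i j)"
  have QL: "2 * (y \<bullet> (laplacian (2*n) ?E *\<^sub>v y)) = Q"
    unfolding Q_def g_def h_def by (rule lap_quad[OF _ _ y]) (auto simp: E_irr E_sym)
  have g11: "(\<Sum>i<n. \<Sum>j<n. g i j) = Q1" unfolding Q1_def g_def
    by (intro sum.cong refl) (auto simp: E_11 h_def)
  have g22: "(\<Sum>i\<in>{n..<2*n}. \<Sum>j\<in>{n..<2*n}. g i j) = Q2" unfolding Q2_def g_def
    by (intro sum.cong refl) (auto simp: E_22 h_def)
  have g12: "(\<Sum>i<n. \<Sum>j\<in>{n..<2*n}. g i j) \<ge> d"
  proof -
    have "d = g a b" unfolding d_def g_def using ab a b E_12[of a b] by simp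
    also have "g a b \<le> (\<Sum>j\<in>{n..<2*n}. g a j)" by (rule member_le_sum) (use b gnn in auto)
    also have "\<dots> \<le> (\<Sum>i<n. \<Sum>j\<in>{n..<2*n}. g i j)" by (rule member_le_sum) (use a gnn in \<open>auto intro: sum_nonneg\<close>)
    finally show ?thesis .
  qed
  have g21: "(\<Sum>i\<in>{n..<2*n}. \<Sum>j<n. g i j) \<ge> d"
  proof -
    have "d = g b a" unfolding d_def g_def using ab a b E_21[of b a] hsym by simp
    also have "g b a \<le> (\<Sum>j<n. g b j)" by (rule member_le_sum) (use a gnn in auto)
    also have "\<dots> \<le> (\<Sum>i\<in>{n..<2*n}. \<Sum>j<n. g i j)" by (rule member_le_sum) (use b gnn in \<open>auto intro: sum_nonneg\<close>)
    finally show ?thesis .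
  qed
  have Qge: "Q \<ge> Q1 + Q2 + 2 * d" unfolding Q_def split using g11 g22 g12 g21 by linarith
  define T where "T = (\<Sum>i<2*n. \<Sum>j<2*n. h i j)"
  have Tyy: "T = 4 * real n * (y \<bullet> y)"
  proof -
    have "T = 2 * real (2*n) * (\<Sum>i<2*n. (y$i)^2) - 2 * (\<Sum>i<2*n. y$i)^2"
      unfolding T_def h_def by (rule sum_sq_diff)
    also have "(\<Sum>i<2*n. (y$i)^2) = y \<bullet> y" using y by (simp add: scalar_prod_def lessThan_atLeast0 power2_eq_square)
    finally show ?thesis using s0 by simp
  qed
  have C21: "(\<Sum>i\<in>{n..<2*n}. \<Sum>j<n. h i j) = C" unfolding C_def
    by (subst sum.swap) (simp add: hsym)
  have hQ1: "(\<Sum>i<n. h i a) \<le> Q1" unfolding Q1_def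
    by (rule sum_mono, rule member_le_sum) (use a hnn in auto)
  have hQ2: "(\<Sum>j\<in>{n..<2*n}. h b j) \<le> Q2" unfolding Q2_def
    by (rule member_le_sum) (use b hnn in \<open>auto intro: sum_nonneg\<close>)
  have Cle: "C \<le> 3 * real n * Q1 + 3 * real n ^ 2 * d + 3 * real n * Q2"
  proof -
    have "C \<le> (\<Sum>i<n. \<Sum>j\<in>{n..<2*n}. 3 * (h i a + d + h b j))" unfolding C_def
    proof (intro sum_mono)
      fix i j
      have "h i j = ((y$i - y$a) + (y$a - y$b) + (y$b - y$j))^2" unfolding h_def by simp
      also have "\<dots> \<le> 3 * (h i a + d + h b j)" unfolding h_def d_def by (rule sq3)
      finally show "h i j \<le> 3 * (h i a + d + h b j)" .
    qed
    also have "\<dots> = 3 * real n * (\<Sum>i<n. h i a) + 3 * real n ^ 2 * d + 3 * real n * (\<Sum>j\<in>{n..<2*n}. h b j)"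
      by (simp add: sum.distrib sum_distrib_left sum_distrib_right power2_eq_square algebra_simps)
    also have "\<dots> \<le> 3 * real n * Q1 + 3 * real n ^ 2 * d + 3 * real n * Q2"
      using hQ1 hQ2 by (intro add_mono mult_left_mono) auto
    finally show ?thesis .
  qed
  have Tle: "T \<le> (6 * real n + 1) * (Q1 + Q2) + 6 * real n ^ 2 * d"
  proof -
    have "T = Q1 + C + C + Q2" unfolding T_def split using C21 unfolding Q1_def Q2_def C_def by simp
    thus ?thesis using Cle by (simp add: algebra_simps)
  qed
  define K where "K = 3 * real n * (2 * real n - 1)"
  have Kpos: "K > 0" unfolding K_def using n1 by simp
  have Q1nn: "Q1 \<ge> 0" and Q2nn: "Q2 \<ge> 0" and dnn: "d \<ge> 0"
    unfolding Q1_def Q2_def d_def using hnn by (auto intro: sum_nonneg)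
  have TK: "T \<le> K * Q"
  proof (cases "n = 1")
    case True
    have s1: "{..<n} = {0}" and s2: "{n..<2*n} = {n}" using True by auto
    have "Q1 = 0" "Q2 = 0" unfolding Q1_def Q2_def h_def s1 s2 by auto
    thus ?thesis using Tle Qge True dnn unfolding K_def by simp
  next
    case False
    hence n2: "real n \<ge> 2" using n1 by simp
    have nn: "2 * real n \<le> real n * real n" using mult_right_mono[OF n2, of "real n"] by simp
    have Ke: "K = 6 * (real n * real n) - 3 * real n" unfolding K_def by (simp add: algebra_simps)
    have K1: "6 * real n + 1 \<le> K" using Ke n2 nn by linarith
    have K2: "6 * real n ^ 2 \<le> 2 * K" using Ke n2 nn by (simp add: power2_eq_square)
    have "T \<le> K * (Q1 + Q2) + 2 * K * d"
      using Tle mult_right_mono[OF K1, of "Q1 + Q2"] mult_right_mono[OF K2 dnn] Q1nn Q2nn by linarith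
    also have "\<dots> = K * (Q1 + Q2 + 2 * d)" by (simp add: algebra_simps)
    also have "\<dots> \<le> K * Q" using Qge Kpos by (intro mult_left_mono) auto
    finally show ?thesis .
  qed
  have "4 * real n * (y \<bullet> y) \<le> 2 * K * (y \<bullet> (laplacian (2*n) ?E *\<^sub>v y))"
  proof -
    have "K * Q = 2 * K * (y \<bullet> (laplacian (2*n) ?E *\<^sub>v y))" using QL[symmetric] by simp
    thus ?thesis using TK Tyy by linarith
  qed
  hence "(4 * real n * (y \<bullet> y)) / (2 * K) \<le> y \<bullet> (laplacian (2*n) ?E *\<^sub>v y)"
    using Kpos by (simp add: divide_le_eq mult.commute)
  moreover have "(4 * real n * (y \<bullet> y)) / (2 * K) = 2 / (3 * (2 * real n - 1)) * (y \<bullet> y)"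
    unfolding K_def using n1 by (simp add: field_simps)
  ultimately show ?thesis by simp
qed

end

lemma card_ge2_obtain:
  assumes "finite S" "2 \<le> card S"
  obtains i j where "i \<in> S" "j \<in> S" "i \<noteq> j"
proof -
  from assms have "S \<noteq> {}" by auto
  then obtain i where i: "i \<in> S" by auto
  have "card (S - {i}) \<ge> 1" using assms i by (simp add: card_Diff_singleton)
  hence "S - {i} \<noteq> {}" by (metis card.empty not_one_le_zero)
  then obtain j where "j \<in> S - {i}" by auto
  thus ?thesis using i that by auto
qed

theorem theorem4p2:
  fixes n k :: nat and F :: "(nat \<times> nat) set"
  assumes "1 \<le> n" and "1 \<le> k" and "k \<le> n"
    and "F \<subseteq> {0..<n} \<times> {n..<2*n}" and "card F = k"
  shows "card (D_vertices n) = 2 * n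
    \<and> 2 / (3 * (2 * real n - 1)) \<le> lambda2 (2*n) (D_adj n F)
    \<and> lambda2 (2*n) (D_adj n F) \<le> 2 * real k / real n"
proof -
  note n1 = assms(1) and k1 = assms(2) and Fsub = assms(4) and cardF = assms(5)
  let ?N = "2*n"
  let ?E = "D_adj n F"
  let ?L = "laplacian ?N ?E"
  have Lc: "?L \<in> carrier_mat ?N ?N" by simp
  have symL: "transpose_mat ?L = ?L"
    by (rule lap_sym) (rule E_sym[OF n1 Fsub cardF k1])
  obtain us ms where sp: "length us = ?N" "length ms = ?N" "orthon ?N us"
    "\<forall>k<?N. ?L *\<^sub>v (us!k) = (ms!k) \<cdot>\<^sub>v (us!k)"
    "char_poly ?L = (\<Prod>a\<leftarrow>ms. [:-a, 1:])"
    "\<forall>y\<in>carrier_vec ?N. y \<bullet> y = (\<Sum>k<?N. (us!k \<bullet> y)^2) \<and>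
         y \<bullet> (?L *\<^sub>v y) = (\<Sum>k<?N. ms!k * (us!k \<bullet> y)^2)"
    using spectral[OF Lc symL] by blast
  have l2: "lambda2 ?N ?E = sort ms ! 1"
    unfolding lambda2_def sorted_eigenvalues_def sp(5) proots_lin_prod by simp
  have uc: "k < ?N \<Longrightarrow> us!k \<in> carrier_vec ?N" for k using orthon_carrier[OF sp(3)] sp(1) by simp
  have uo: "i < ?N \<Longrightarrow> j < ?N \<Longrightarrow> us!i \<bullet> us!j = (if i = j then 1 else 0)" for i j
    using sp(3,1) unfolding orthon_def by auto
  define c where "c = 2 / (3 * (2 * real n - 1))"
  have low: "length (filter (\<lambda>x. x < c) ms) \<le> 1"
  proof (rule ccontr)
    assume "\<not> ?thesis"
    hence "2 \<le> card {i. i < length ms \<and> ms!i < c}" by (simp add: length_filter_conv_card)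
    then obtain i j where ij: "i \<in> {i. i < length ms \<and> ms!i < c}" "j \<in> {i. i < length ms \<and> ms!i < c}" "i \<noteq> j"
    proof (rule card_ge2_obtain[rotated])
      show "finite {i. i < length ms \<and> ms!i < c}" by (rule finite_subset[of _ "{..<length ms}"]) auto
    qed
    hence i: "i < ?N" "ms!i < c" and j: "j < ?N" "ms!j < c" using sp(2) by auto
    define w where "w = vec ?N (\<lambda>_. 1::real)"
    have w: "w \<in> carrier_vec ?N" unfolding w_def by simp
    define \<alpha> where "\<alpha> = us!i \<bullet> w"
    define \<beta> where "\<beta> = us!j \<bullet> w"
    define a where "a = (if \<alpha> = 0 \<and> \<beta> = 0 then 1 else \<beta>)"
    define b where "b = (if \<alpha> = 0 \<and> \<beta> = 0 then 0 else - \<alpha>)"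
    have ab: "a^2 + b^2 > 0" unfolding a_def b_def by (auto simp: add_pos_nonneg sum_power2_gt_zero_iff)
    have ab0: "a * \<alpha> + b * \<beta> = 0" unfolding a_def b_def by auto
    define y where "y = a \<cdot>\<^sub>v us!i + b \<cdot>\<^sub>v us!j"
    have ui: "us!i \<in> carrier_vec ?N" and uj: "us!j \<in> carrier_vec ?N" using uc i j by auto
    have y: "y \<in> carrier_vec ?N" unfolding y_def using ui uj by simp
    have yw: "y \<bullet> w = 0"
      unfolding y_def using ui uj w ab0 by (simp add: add_scalar_prod_distrib[of _ ?N] \<alpha>_def \<beta>_def)
    have s0: "(\<Sum>i<?N. y$i) = 0"
      using yw y unfolding w_def by (simp add: scalar_prod_def lessThan_atLeast0)
    have yy: "y \<bullet> y = a^2 + b^2"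
      unfolding y_def using ui uj uo[OF i(1) i(1)] uo[OF i(1) j(1)] uo[OF j(1) i(1)] uo[OF j(1) j(1)] ij(3)
      by (simp add: add_scalar_prod_distrib[of _ ?N] scalar_prod_add_distrib[of _ ?N] power2_eq_square)
    have Ly: "?L *\<^sub>v y = (a * ms!i) \<cdot>\<^sub>v us!i + (b * ms!j) \<cdot>\<^sub>v us!j"
      unfolding y_def using ui uj sp(4) i j Lc
      by (simp add: mult_add_distrib_mat_vec[OF Lc] mult_mat_vec[OF Lc] smult_smult_assoc)
    have yLy: "y \<bullet> (?L *\<^sub>v y) = a^2 * ms!i + b^2 * ms!j"
      unfolding Ly unfolding y_def using ui uj uo[OF i(1) i(1)] uo[OF i(1) j(1)] uo[OF j(1) i(1)] uo[OF j(1) j(1)] ij(3)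
      by (simp add: add_scalar_prod_distrib[of _ ?N] scalar_prod_add_distrib[of _ ?N] power2_eq_square)
    have "c * (y \<bullet> y) \<le> y \<bullet> (?L *\<^sub>v y)"
      unfolding c_def by (rule lower_quad[OF n1 Fsub cardF k1 y s0])
    moreover have "a^2 * ms!i + b^2 * ms!j < c * (a^2 + b^2)"
    proof -
      have "a^2 * ms!i \<le> a^2 * c" using i(2) by (intro mult_left_mono) auto
      moreover have "b^2 * ms!j \<le> b^2 * c" using j(2) by (intro mult_left_mono) auto
      moreover have "a^2 * ms!i < a^2 * c \<or> b^2 * ms!j < b^2 * c"
      proof (cases "a = 0")
        case True
        hence "b \<noteq> 0" using ab by auto
        thus ?thesis using j(2) by simp
      next
        case False thus ?thesis using i(2) by simp
      qed
      ultimately show ?thesis by (simp add: algebra_simps) linarith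
    qed
    ultimately show False using yy yLy by simp
  qed
  have lowb: "c \<le> sort ms ! 1" by (rule sort_second_ge[OF low]) (use sp(2) n1 in simp)
  define t where "t = 2 * real k / real n"
  have up: "2 \<le> length (filter (\<lambda>x. x \<le> t) ms)"
  proof (rule ccontr)
    assume "\<not> ?thesis"
    hence c1: "card {i. i < length ms \<and> ms!i \<le> t} \<le> 1" by (simp add: length_filter_conv_card)
    obtain k0 where k0: "\<And>k. k < ?N \<Longrightarrow> k \<noteq> k0 \<Longrightarrow> ms!k > t"
    proof (cases "{i. i < length ms \<and> ms!i \<le> t} = {}")
      case True thus ?thesis using that[of 0] sp(2) by force
    next
      case False
      then obtain k0 where k0: "k0 \<in> {i. i < length ms \<and> ms!i \<le> t}" by blast
      have "\<forall>a\<in>{i. i < length ms \<and> ms!i \<le> t}. \<forall>b\<in>{i. i < length ms \<and> ms!i \<le> t}. a = b"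
        using c1 by (subst card_le_Suc0_iff_eq[symmetric]) auto
      hence "\<And>k. k < ?N \<Longrightarrow> k \<noteq> k0 \<Longrightarrow> ms!k > t" using k0 sp(2) by force
      thus ?thesis by (rule that)
    qed
    define sg where "sg i = (if i < n then 1 else -1::real)" for i
    define \<alpha> where "\<alpha> = (\<Sum>i<?N. (us!k0)$i)"
    define \<beta> where "\<beta> = (\<Sum>i<?N. (us!k0)$i * sg i)"
    define a where "a = (if \<alpha> = 0 \<and> \<beta> = 0 then 1 else \<beta>)"
    define b where "b = (if \<alpha> = 0 \<and> \<beta> = 0 then 0 else - \<alpha>)"
    have ab: "a^2 + b^2 > 0" unfolding a_def b_def by (auto simp: add_pos_nonneg sum_power2_gt_zero_iff)
    have ab0: "a * \<alpha> + b * \<beta> = 0" unfolding a_def b_def by auto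
    define y where "y = vec ?N (\<lambda>i. a + b * (if i < n then 1 else -1))"
    have y: "y \<in> carrier_vec ?N" unfolding y_def by simp
    have yy: "y \<bullet> y = 2 * real n * (a^2 + b^2)" unfolding y_def by (rule upper_test[OF n1 Fsub cardF k1])
    have yLy: "y \<bullet> (?L *\<^sub>v y) = 4 * real k * b^2" unfolding y_def by (rule upper_test[OF n1 Fsub cardF k1])
    have z0: "us!k0 \<bullet> y = 0"
    proof -
      have "us!k0 \<bullet> y = (\<Sum>i<?N. (us!k0)$i * (a + b * sg i))"
        unfolding y_def sg_def by (simp add: scalar_prod_def lessThan_atLeast0)
      also have "\<dots> = a * \<alpha> + b * \<beta>" unfolding \<alpha>_def \<beta>_def
        by (simp add: algebra_simps sum.distrib sum_distrib_left)
      finally show ?thesis using ab0 by simp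
    qed
    define z where "z k = us!k \<bullet> y" for k
    have par: "y \<bullet> y = (\<Sum>k<?N. (z k)^2)" "y \<bullet> (?L *\<^sub>v y) = (\<Sum>k<?N. ms!k * (z k)^2)"
      using sp(6) y unfolding z_def by auto
    have "0 < 2 * real n * (a^2 + b^2)" using ab n1 by simp
    hence pos: "(\<Sum>k<?N. (z k)^2) > 0" using par(1) yy by simp
    then obtain k1 where k1: "k1 < ?N" "z k1 \<noteq> 0"
      by (metis (no_types, lifting) lessThan_iff power_zero_numeral sum.neutral less_irrefl)
    have k1k0: "k1 \<noteq> k0" using k1 z0 unfolding z_def by auto
    have "0 < (\<Sum>k<?N. (ms!k - t) * (z k)^2)"
    proof (rule sum_pos2[of _ k1])
      show "0 < (ms!k1 - t) * (z k1)^2" using k0[OF k1(1) k1k0] k1(2) by simp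
    next
      fix k assume "k \<in> {..<?N}"
      thus "0 \<le> (ms!k - t) * (z k)^2"
        using k0[of k] z0 unfolding z_def by (cases "k = k0") (auto intro: less_imp_le)
    qed (use k1 in auto)
    hence "t * (y \<bullet> y) < y \<bullet> (?L *\<^sub>v y)"
      unfolding par by (simp add: algebra_simps sum_subtractf sum_distrib_left)
    moreover have "y \<bullet> (?L *\<^sub>v y) \<le> t * (y \<bullet> y)"
    proof -
      have "t * (y \<bullet> y) = 4 * real k * (a^2 + b^2)" unfolding yy t_def using n1 by simp
      moreover have "4 * real k * b^2 \<le> 4 * real k * (a^2 + b^2)" by (intro mult_left_mono) auto
      ultimately show ?thesis using yLy by simp
    qed
    ultimately show False by simp
  qed
  have upb: "sort ms ! 1 \<le> t" by (rule sort_second_le[OF up])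
  have cardV: "card (D_vertices n) = 2 * n" unfolding D_vertices_def by simp
  show ?thesis using cardV lowb upb l2 unfolding c_def t_def by simp
qed

end
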